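(* Let $n,m\geq1$, $G=S_n^m$ and $H=S_n$ embedded diagonally in $G$. For $g=(\sigma_1,\dots,\sigma_m)\in G$: (1) $H_g=\mathrm{Aut}_{F_m^0}(Q_{(\sigma_i)})=C_{S_n}(\phi_{(\sigma_i)}(F_m^0))$ (identifying $H$ with $S_n$). (2) For $(\sigma_i),(\tau_i)\in S_n^m$ we have $(\sigma_i)\sim(\tau_i)$ if and only if $Q_{(\sigma_i)}\cong Q_{(\tau_i)}$ as $F_m^0$-sets.
   Context: For a finite group $G$, a subgroup $H$ and $x\in G$, set $H_x=\bigcap_{i\in\mathbb{Z}}x^iHx^{-i}$ and $S_x=H_x\cdot x\subseteq G$; define $x\sim y$ if there is $h\in H$ with $hS_xh^{-1}=S_y$. $F_m$ is the free group on $z_1,\dots,z_m$, $\upsilon:F_m\to\mathbb{Z}$ is the homomorphism with $\upsilon(z_i)=1$ for all $i$, and $F_m^0=\ker\upsilon$. For $(\sigma_i)\in S_n^m$, $\phi_{(\sigma_i)}:F_m\to S_n$ is the homomorphism with $z_i\mapsto\sigma_i$, and $Q_{(\sigma_i)}$ is the set $\{1,\dots,n\}$ with the $F_m$-action via $\phi_{(\sigma_i)}$ (and, by restriction, the $F_m^0$-action). $C_{S_n}(\cdot)$ denotes the centralizer. *)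

theory Defs
  imports "HOL-Algebra.Sym_Groups" "HOL-Algebra.Product_Groups"
begin

definition Gnm :: "nat \<Rightarrow> nat \<Rightarrow> (nat \<Rightarrow> nat \<Rightarrow> nat) monoid" where
  "Gnm n m = product_group {1..m} (\<lambda>_. sym_group n)"

definition diag :: "nat \<Rightarrow> (nat \<Rightarrow> nat) \<Rightarrow> (nat \<Rightarrow> nat \<Rightarrow> nat)" where
  "diag m \<sigma> = (\<lambda>i\<in>{1..m}. \<sigma>)"

definition Hdiag :: "nat \<Rightarrow> nat \<Rightarrow> (nat \<Rightarrow> nat \<Rightarrow> nat) set" where
  "Hdiag n m = diag m ` carrier (sym_group n)"

definition Hx :: "('a, 'b) monoid_scheme \<Rightarrow> 'a set \<Rightarrow> 'a \<Rightarrow> 'a set" where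
  "Hx G H x = (\<Inter>i::int. (x [^]\<^bsub>G\<^esub> i) <#\<^bsub>G\<^esub> H #>\<^bsub>G\<^esub> inv\<^bsub>G\<^esub> (x [^]\<^bsub>G\<^esub> i))"

definition Sx :: "('a, 'b) monoid_scheme \<Rightarrow> 'a set \<Rightarrow> 'a \<Rightarrow> 'a set" where
  "Sx G H x = Hx G H x #>\<^bsub>G\<^esub> x"

definition sim_rel :: "('a, 'b) monoid_scheme \<Rightarrow> 'a set \<Rightarrow> 'a \<Rightarrow> 'a \<Rightarrow> bool" where
  "sim_rel G H x y \<longleftrightarrow> (\<exists>h\<in>H. h <#\<^bsub>G\<^esub> Sx G H x #>\<^bsub>G\<^esub> inv\<^bsub>G\<^esub> h = Sx G H y)"

text \<open>A word in z_1..z_m: list of letters (i, True) = z_i, (i, False) = z_i^(-1).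
  Elements of F_m are represented by (not necessarily reduced) words over {1..m};
  images under homomorphisms and the induced actions do not depend on reduction.\<close>
type_synonym word = "(nat \<times> bool) list"

definition words :: "nat \<Rightarrow> word set" where
  "words m = {w. \<forall>(i, b) \<in> set w. i \<in> {1..m}}"

definition upsilon :: "word \<Rightarrow> int" where
  "upsilon w = (\<Sum>(i, b) \<leftarrow> w. if b then 1 else -1)"

definition Fm0 :: "nat \<Rightarrow> word set" where
  "Fm0 m = {w \<in> words m. upsilon w = 0}"

text \<open>phi_(sigma_i) : F_m \<rightarrow> S_n, z_i \<mapsto> sigma_i (sigma given as element of S_n^m)\<close>
definition phi :: "(nat \<Rightarrow> nat \<Rightarrow> nat) \<Rightarrow> word \<Rightarrow> (nat \<Rightarrow> nat)" where
  "phi \<sigma> w = foldr (\<lambda>(i, b) acc. (if b then \<sigma> i else inv' (\<sigma> i)) \<circ> acc) w id"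

text \<open>Automorphisms of the F_m^0-set Q_sigma = {1..n}\<close>
definition AutF0 :: "nat \<Rightarrow> nat \<Rightarrow> (nat \<Rightarrow> nat \<Rightarrow> nat) \<Rightarrow> (nat \<Rightarrow> nat) set" where
  "AutF0 n m \<sigma> = {f. f permutes {1..n} \<and>
      (\<forall>w\<in>Fm0 m. \<forall>x\<in>{1..n}. f (phi \<sigma> w x) = phi \<sigma> w (f x))}"

definition iso_F0 :: "nat \<Rightarrow> nat \<Rightarrow> (nat \<Rightarrow> nat \<Rightarrow> nat) \<Rightarrow> (nat \<Rightarrow> nat \<Rightarrow> nat) \<Rightarrow> bool" where
  "iso_F0 n m \<sigma> \<tau> \<longleftrightarrow> (\<exists>f. bij_betw f {1..n} {1..n} \<and>
      (\<forall>w\<in>Fm0 m. \<forall>x\<in>{1..n}. f (phi \<sigma> w x) = phi \<tau> w (f x)))"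

definition centralizer :: "('a, 'b) monoid_scheme \<Rightarrow> 'a set \<Rightarrow> 'a set" where
  "centralizer G A = {g \<in> carrier G. \<forall>a\<in>A. g \<otimes>\<^bsub>G\<^esub> a = a \<otimes>\<^bsub>G\<^esub> g}"

end

theory Submission
  imports Defs
begin

declare sym_group_inv_equality[simp del]

lemma words_Cons[simp]: "(a # w \<in> words m) = (fst a \<in> {1..m} \<and> w \<in> words m)"
  by (cases a) (auto simp: words_def)
lemma words_append[simp]: "(u @ v \<in> words m) = (u \<in> words m \<and> v \<in> words m)"
  by (auto simp: words_def)
lemma words_Nil[simp]: "[] \<in> words m"
  by (auto simp: words_def)
lemma ups_Nil[simp]: "upsilon [] = 0"
  by (simp add: upsilon_def)
lemma ups_Cons[simp]: "upsilon (a # w) = (if snd a then 1 else -1) + upsilon w"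
  by (cases a) (simp add: upsilon_def)
lemma ups_append[simp]: "upsilon (u @ v) = upsilon u + upsilon v"
  by (induction u) auto

lemma (in group) cancA[simp]: "x \<in> carrier G \<Longrightarrow> y \<in> carrier G \<Longrightarrow> x \<otimes> (inv x \<otimes> y) = y"
  by (simp add: m_assoc[symmetric])
lemma (in group) cancB[simp]: "x \<in> carrier G \<Longrightarrow> y \<in> carrier G \<Longrightarrow> inv x \<otimes> (x \<otimes> y) = y"
  by (simp add: m_assoc[symmetric])
lemma (in group) conj_step:
  assumes x: "x \<in> carrier G" and s: "s \<in> carrier G"
  shows "(inv (x [^] i) \<otimes> s \<otimes> x [^] i) \<otimes> x = x \<otimes> (inv (x [^] (i+1::int)) \<otimes> s \<otimes> x [^] (i+1))"
proof -
  have "x [^] (i+1) = x [^] i \<otimes> x" using x by (simp add: int_pow_mult)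
  then show ?thesis using x s by (simp add: inv_mult_group m_assoc)
qed

definition (in group) gok :: "nat \<Rightarrow> (nat \<Rightarrow> 'a) \<Rightarrow> bool" where
  "gok m s = (\<forall>i\<in>{1..m}. s i \<in> carrier G)"
definition (in group) glt :: "(nat \<Rightarrow> 'a) \<Rightarrow> nat \<times> bool \<Rightarrow> 'a" where
  "glt s a = (if snd a then s (fst a) else inv (s (fst a)))"
definition (in group) gphi :: "(nat \<Rightarrow> 'a) \<Rightarrow> word \<Rightarrow> 'a" where
  "gphi s w = foldr (\<lambda>a acc. glt s a \<otimes> acc) w \<one>"
definition (in group) GCen :: "nat \<Rightarrow> (nat \<Rightarrow> 'a) \<Rightarrow> 'a set" where
  "GCen m s = {c \<in> carrier G. \<forall>w\<in>Fm0 m. c \<otimes> gphi s w = gphi s w \<otimes> c}"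

lemma (in group) gphi_Nil[simp]: "gphi s [] = \<one>" by (simp add: gphi_def)
lemma (in group) gphi_Cons[simp]: "gphi s (a # w) = glt s a \<otimes> gphi s w" by (simp add: gphi_def)
lemma (in group) glt_closed[simp]: "gok m s \<Longrightarrow> fst a \<in> {1..m} \<Longrightarrow> glt s a \<in> carrier G"
  by (auto simp: gok_def glt_def)
lemma (in group) gphi_closed[simp]: "gok m s \<Longrightarrow> w \<in> words m \<Longrightarrow> gphi s w \<in> carrier G"
  by (induction w) auto
lemma (in group) gphi_append: "gok m s \<Longrightarrow> u \<in> words m \<Longrightarrow> v \<in> words m \<Longrightarrow> gphi s (u @ v) = gphi s u \<otimes> gphi s v"
  by (induction u) (auto simp: m_assoc)

lemma (in group) D_imp_Cen:
  assumes ok: "gok m s" and m: "1 \<le> m" and sg: "\<sigma> \<in> carrier G"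
    and D: "\<forall>i::int. \<forall>j\<in>{1..m}. \<forall>k\<in>{1..m}.
        inv (s j [^] i) \<otimes> \<sigma> \<otimes> s j [^] i = inv (s k [^] i) \<otimes> \<sigma> \<otimes> s k [^] i"
  shows "\<sigma> \<in> GCen m s"
proof -
  define \<tau> where "\<tau> i = inv (s 1 [^] i) \<otimes> \<sigma> \<otimes> s 1 [^] i" for i :: int
  have sc: "s j \<in> carrier G" if "j \<in> {1..m}" for j using ok that by (simp add: gok_def)
  have A: "\<tau> i = inv (s j [^] i) \<otimes> \<sigma> \<otimes> s j [^] i" if "j \<in> {1..m}" for i j
  proof -
    have "1 \<in> {1..m}" using m by simp
    then show ?thesis using D that unfolding \<tau>_def by blast
  qed
  have tc: "\<tau> i \<in> carrier G" for i using sc[of 1] m sg by (simp add: \<tau>_def)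
  have B: "\<tau> i \<otimes> s j = s j \<otimes> \<tau> (i+1)" if "j \<in> {1..m}" for i j
    using A[OF that, of i] A[OF that, of "i+1"] conj_step[OF sc[OF that] sg, of i] by simp
  have C: "\<tau> i \<otimes> inv (s j) = inv (s j) \<otimes> \<tau> (i - 1)" if "j \<in> {1..m}" for i j
  proof -
    have "\<tau> (i - 1) \<otimes> s j = s j \<otimes> \<tau> i" using B[OF that, of "i - 1"] by simp
    then have "inv (s j) \<otimes> (\<tau> (i - 1) \<otimes> s j) \<otimes> inv (s j) = inv (s j) \<otimes> (s j \<otimes> \<tau> i) \<otimes> inv (s j)"
      by simp
    then show ?thesis using sc[OF that] tc by (simp add: m_assoc)
  qed
  have L: "\<tau> i \<otimes> glt s a = glt s a \<otimes> \<tau> (i + (if snd a then 1 else -1))" if "fst a \<in> {1..m}" for i a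
    using B[OF that] C[OF that] by (auto simp: glt_def)
  have W: "\<forall>i. \<tau> i \<otimes> gphi s w = gphi s w \<otimes> \<tau> (i + upsilon w)" if "w \<in> words m" for w
    using that
  proof (induction w)
    case Nil then show ?case using tc by simp
  next
    case (Cons a w)
    show ?case
    proof
      fix i
      have "\<tau> i \<otimes> gphi s (a # w) = (\<tau> i \<otimes> glt s a) \<otimes> gphi s w"
        using Cons.prems ok tc by (simp add: m_assoc)
      also have "\<dots> = glt s a \<otimes> (\<tau> (i + (if snd a then 1 else -1)) \<otimes> gphi s w)"
        using L[of a i] Cons.prems ok tc by (simp add: m_assoc)
      also have "\<dots> = gphi s (a # w) \<otimes> \<tau> (i + upsilon (a # w))"
        using Cons ok tc by (simp add: m_assoc add.assoc)
      finally show "\<tau> i \<otimes> gphi s (a # w) = gphi s (a # w) \<otimes> \<tau> (i + upsilon (a # w))" .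
    qed
  qed
  have "\<tau> 0 = \<sigma>" using sg by (simp add: \<tau>_def)
  then show ?thesis using W sg by (auto simp: GCen_def Fm0_def)
qed

lemma (in group) gphi_rep_T:
  assumes "s k \<in> carrier G" shows "gphi s (replicate n (k, True)) = s k [^] n"
proof (induction n)
  case 0 then show ?case by simp
next
  case (Suc n)
  have "gphi s (replicate (Suc n) (k, True)) = s k \<otimes> gphi s (replicate n (k, True))" by (simp add: glt_def)
  also have "\<dots> = s k \<otimes> s k [^] n" by (simp only: Suc)
  also have "\<dots> = s k [^] Suc n" by (rule nat_pow_Suc2[OF assms, symmetric])
  finally show ?case .
qed

lemma (in group) gphi_rep_F:
  assumes "s k \<in> carrier G" shows "gphi s (replicate n (k, False)) = inv (s k) [^] n"
proof (induction n)
  case 0 then show ?case by simp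
next
  case (Suc n)
  have "gphi s (replicate (Suc n) (k, False)) = inv (s k) \<otimes> gphi s (replicate n (k, False))" by (simp add: glt_def)
  also have "\<dots> = inv (s k) \<otimes> inv (s k) [^] n" by (simp only: Suc)
  also have "\<dots> = inv (s k) [^] Suc n" using assms by (intro nat_pow_Suc2[symmetric]) simp
  finally show ?case .
qed

definition pw :: "nat \<Rightarrow> int \<Rightarrow> word" where
  "pw k i = (if i \<ge> 0 then replicate (nat i) (k, True) else replicate (nat (-i)) (k, False))"

lemma ups_rep: "upsilon (replicate n a) = of_nat n * (if snd a then 1 else -1)"
  by (induction n) (auto simp: algebra_simps)

lemma ups_pw: "upsilon (pw k i) = i"
  by (auto simp: pw_def ups_rep)

lemma words_pw: "k \<in> {1..m} \<Longrightarrow> pw k i \<in> words m"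
  by (auto simp: pw_def words_def)

lemma (in group) gphi_pw:
  assumes ok: "gok m s" and k: "k \<in> {1..m}" shows "gphi s (pw k i) = s k [^] i"
proof -
  have sk: "s k \<in> carrier G" using ok k by (simp add: gok_def)
  show ?thesis
  proof (cases "i \<ge> 0")
    case True
    then have "pw k i = replicate (nat i) (k, True)" unfolding pw_def by (rule if_P)
    then have "gphi s (pw k i) = s k [^] nat i" using gphi_rep_T[of s k, OF sk] by (simp only:)
    also have "\<dots> = s k [^] (int (nat i))" by (rule int_pow_int[symmetric])
    also have "int (nat i) = i" using True by simp
    finally show ?thesis .
  next
    case False
    then have "pw k i = replicate (nat (- i)) (k, False)" unfolding pw_def by (rule if_not_P)
    then have "gphi s (pw k i) = inv (s k) [^] nat (- i)" using gphi_rep_F[of s k, OF sk] by (simp only:)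
    also have "\<dots> = inv (s k [^] nat (- i))" by (rule nat_pow_inv[OF sk])
    also have "\<dots> = s k [^] (- int (nat (- i)))" by (rule int_pow_neg_int[OF sk, symmetric])
    also have "- int (nat (- i)) = i" using False by simp
    finally show ?thesis .
  qed
qed

lemma (in group) Cen_imp_D:
  assumes ok: "gok m s" and c: "\<sigma> \<in> GCen m s" and j: "j \<in> {1..m}" and k: "k \<in> {1..m}"
  shows "inv (s j [^] (i::int)) \<otimes> \<sigma> \<otimes> s j [^] i = inv (s k [^] i) \<otimes> \<sigma> \<otimes> s k [^] i"
proof -
  define a where "a = s k [^] i"
  define b where "b = s j [^] i"
  have sg: "\<sigma> \<in> carrier G" using c by (simp add: GCen_def)
  have sj: "s j \<in> carrier G" "s k \<in> carrier G" using ok j k by (auto simp: gok_def)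
  have ac: "a \<in> carrier G" and bc: "b \<in> carrier G" using sj by (auto simp: a_def b_def)
  have w: "pw k i @ pw j (-i) \<in> Fm0 m" using j k by (simp add: Fm0_def words_pw ups_pw)
  have "gphi s (pw k i @ pw j (-i)) = a \<otimes> inv b"
    using ok j k by (simp add: gphi_append words_pw gphi_pw a_def b_def int_pow_neg gok_def)
  then have e: "\<sigma> \<otimes> (a \<otimes> inv b) = (a \<otimes> inv b) \<otimes> \<sigma>" using c w by (auto simp: GCen_def)
  have "inv a \<otimes> (\<sigma> \<otimes> (a \<otimes> inv b)) \<otimes> b = inv a \<otimes> ((a \<otimes> inv b) \<otimes> \<sigma>) \<otimes> b" using e by simp
  then have "inv a \<otimes> \<sigma> \<otimes> a = inv b \<otimes> \<sigma> \<otimes> b" using ac bc sg by (simp add: m_assoc)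
  then show ?thesis by (simp add: a_def b_def)
qed

lemma split_aux:
  "\<forall>t::int. (d = 1 \<or> d = -1) \<longrightarrow> d * (t + upsilon l) \<ge> 1 \<longrightarrow> d * t \<le> 0 \<longrightarrow>
     (\<exists>u b v. l = u @ b # v \<and> t + upsilon u = 0 \<and> (if snd b then 1 else -1) = d)"
proof (induction l)
  case Nil then show ?case by auto
next
  case (Cons x l)
  show ?case
  proof (intro allI impI)
    fix t :: int assume d: "d = 1 \<or> d = -1" and h1: "d * (t + upsilon (x # l)) \<ge> 1" and h2: "d * t \<le> 0"
    show "\<exists>u b v. x # l = u @ b # v \<and> t + upsilon u = 0 \<and> (if snd b then 1 else -1) = d"
    proof (cases "t = 0 \<and> (if snd x then 1 else -1) = d")
      case True then show ?thesis by (intro exI[of _ "[]"]) auto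
    next
      case False
      define t' where "t' = t + (if snd x then 1 else -1)"
      have "d * (t' + upsilon l) \<ge> 1" using h1 by (simp add: t'_def add.assoc)
      moreover have "d * t' \<le> 0" using False d h2 by (auto simp: t'_def split: if_splits)
      ultimately obtain u b v where "l = u @ b # v" "t' + upsilon u = 0" "(if snd b then 1 else -1) = d"
        using Cons.IH d by blast
      then show ?thesis by (intro exI[of _ "x # u"]) (auto simp: t'_def add.assoc)
    qed
  qed
qed

lemma decomp:
  assumes "w \<noteq> []" "upsilon w = 0"
  shows "\<exists>a u b v. w = a # u @ b # v \<and> upsilon u = 0 \<and> upsilon v = 0 \<and> snd b = (\<not> snd a)"
proof -
  obtain a r where w: "w = a # r" using assms by (cases w) auto
  define d :: int where "d = (if snd a then -1 else 1)"
  have "d * (0 + upsilon r) \<ge> 1" using assms w by (auto simp: d_def)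
  moreover have dd: "d = 1 \<or> d = -1" by (simp add: d_def)
  ultimately obtain u b v where "r = u @ b # v" "0 + upsilon u = 0" "(if snd b then 1 else -1) = d"
    using split_aux[of d r, rule_format, of 0] by auto
  then show ?thesis using assms w by (intro exI[of _ a] exI[of _ u] exI[of _ b] exI[of _ v]) (auto simp: d_def split: if_splits)
qed


lemma Fm0_Cons_snoc: "a # u @ [b] \<in> Fm0 m \<longleftrightarrow> fst a \<in> {1..m} \<and> fst b \<in> {1..m} \<and> u \<in> words m \<and> upsilon u + (if snd a then 1 else -1) + (if snd b then 1 else -1) = 0"
  by (auto simp: Fm0_def)

lemma (in group) twist:
  assumes ok: "gok m \<tau>" and c: "c \<in> GCen m \<tau>"
  shows "w \<in> Fm0 m \<Longrightarrow> gphi (\<lambda>j. c \<otimes> \<tau> j) w = gphi \<tau> w"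
proof (induction "length w" arbitrary: w rule: less_induct)
  case less
  define \<rho> where "\<rho> = (\<lambda>j. c \<otimes> \<tau> j)"
  have cc: "c \<in> carrier G" using c by (simp add: GCen_def)
  have okr: "gok m \<rho>" using ok cc by (simp add: gok_def \<rho>_def)
  show ?case
  proof (cases "w = []")
    case True then show ?thesis by simp
  next
    case False
    from less.prems have ww: "w \<in> words m" "upsilon w = 0" by (auto simp: Fm0_def)
    obtain a u b v where d: "w = a # u @ b # v" "upsilon u = 0" "upsilon v = 0" "snd b = (\<not> snd a)"
      using decomp[OF False ww(2)] by blast
    have wa: "fst a \<in> {1..m}" "u \<in> words m" "fst b \<in> {1..m}" "v \<in> words m" using ww d by auto
    have u0: "u \<in> Fm0 m" "v \<in> Fm0 m" using wa d by (auto simp: Fm0_def)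
    have IHu: "gphi \<rho> u = gphi \<tau> u" using less.hyps[of u] u0 d(1) by (simp add: \<rho>_def)
    have IHv: "gphi \<rho> v = gphi \<tau> v" using less.hyps[of v] u0 d(1) by (simp add: \<rho>_def)
    have ta: "\<tau> (fst a) \<in> carrier G" and tb: "\<tau> (fst b) \<in> carrier G" using ok wa by (auto simp: gok_def)
    have gu: "gphi \<tau> u \<in> carrier G" using ok wa by simp
    have key: "glt \<rho> a \<otimes> (gphi \<tau> u \<otimes> glt \<rho> b) = glt \<tau> a \<otimes> (gphi \<tau> u \<otimes> glt \<tau> b)"
    proof (cases "snd a")
      case True
      define X where "X = glt \<tau> a \<otimes> (gphi \<tau> u \<otimes> glt \<tau> b)"
      have "a # u @ [b] \<in> Fm0 m" using wa d True by (simp add: Fm0_Cons_snoc)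
      moreover have "gphi \<tau> (a # u @ [b]) = X"
        using ok wa by (simp add: X_def gphi_append m_assoc)
      ultimately have cX: "c \<otimes> X = X \<otimes> c" using c by (auto simp: GCen_def)
      have Xc: "X \<in> carrier G" using ok wa by (simp add: X_def)
      have "glt \<rho> a \<otimes> (gphi \<tau> u \<otimes> glt \<rho> b) = c \<otimes> X \<otimes> inv c"
        using True d(4) cc ta tb gu by (simp add: glt_def \<rho>_def inv_mult_group m_assoc X_def)
      also have "\<dots> = X \<otimes> c \<otimes> inv c" using cX by simp
      also have "\<dots> = X" using Xc cc by (simp add: m_assoc)
      finally show ?thesis by (simp add: X_def)
    next
      case False
      have cu: "c \<otimes> gphi \<tau> u = gphi \<tau> u \<otimes> c" using c u0 by (auto simp: GCen_def)
      have "glt \<rho> a \<otimes> (gphi \<tau> u \<otimes> glt \<rho> b) = inv (\<tau> (fst a)) \<otimes> (inv c \<otimes> (c \<otimes> gphi \<tau> u) \<otimes> \<tau> (fst b))"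
        using False d(4) cc ta tb gu cu by (simp add: glt_def \<rho>_def inv_mult_group m_assoc)
      also have "\<dots> = glt \<tau> a \<otimes> (gphi \<tau> u \<otimes> glt \<tau> b)"
        using False d(4) cc ta tb gu by (simp add: glt_def m_assoc)
      finally show ?thesis .
    qed
    have "gphi \<rho> w = glt \<rho> a \<otimes> (gphi \<tau> u \<otimes> glt \<rho> b) \<otimes> gphi \<tau> v"
      using d(1) wa okr ok IHu IHv by (simp add: gphi_append m_assoc)
    also have "\<dots> = gphi \<tau> w"
      using d(1) wa ok key by (simp add: gphi_append m_assoc)
    finally show ?thesis by (simp add: \<rho>_def)
  qed
qed

lemma (in group) gphi_conj:
  assumes ok: "gok m s" and f: "f \<in> carrier G"
  shows "w \<in> words m \<Longrightarrow> gphi (\<lambda>j. f \<otimes> s j \<otimes> inv f) w = f \<otimes> gphi s w \<otimes> inv f"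
proof (induction w)
  case Nil then show ?case using f by simp
next
  case (Cons a w)
  have sa: "s (fst a) \<in> carrier G" using ok Cons.prems by (auto simp: gok_def)
  have "glt (\<lambda>j. f \<otimes> s j \<otimes> inv f) a = f \<otimes> glt s a \<otimes> inv f"
    using sa f by (simp add: glt_def inv_mult_group m_assoc)
  then show ?case using Cons ok f sa by (simp add: m_assoc)
qed

lemma (in group) GCen_mult: "c \<in> GCen m s \<Longrightarrow> d \<in> GCen m s \<Longrightarrow> gok m s \<Longrightarrow> c \<otimes> d \<in> GCen m s"
  unfolding GCen_def
proof (clarsimp)
  fix w assume c: "c \<in> carrier G" "\<forall>w\<in>Fm0 m. c \<otimes> gphi s w = gphi s w \<otimes> c"
    and d: "d \<in> carrier G" "\<forall>w\<in>Fm0 m. d \<otimes> gphi s w = gphi s w \<otimes> d" and ok: "gok m s" and w: "w \<in> Fm0 m"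
  have g: "gphi s w \<in> carrier G" using ok w by (simp add: Fm0_def)
  have "c \<otimes> d \<otimes> gphi s w = c \<otimes> (gphi s w \<otimes> d)" using c d g w by (simp add: m_assoc)
  also have "\<dots> = gphi s w \<otimes> (c \<otimes> d)" using c d g w by (simp add: m_assoc[symmetric])
  finally show "c \<otimes> d \<otimes> gphi s w = gphi s w \<otimes> (c \<otimes> d)" .
qed

lemma (in group) GCen_inv: "c \<in> GCen m s \<Longrightarrow> gok m s \<Longrightarrow> inv c \<in> GCen m s"
  unfolding GCen_def
proof (clarsimp)
  fix w assume c: "c \<in> carrier G" "\<forall>w\<in>Fm0 m. c \<otimes> gphi s w = gphi s w \<otimes> c"
    and ok: "gok m s" and w: "w \<in> Fm0 m"
  have g: "gphi s w \<in> carrier G" using ok w by (simp add: Fm0_def)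
  have e: "c \<otimes> gphi s w = gphi s w \<otimes> c" using c w by simp
  have "inv c \<otimes> gphi s w = inv c \<otimes> (gphi s w \<otimes> c) \<otimes> inv c" using c g by (simp add: m_assoc)
  also have "\<dots> = inv c \<otimes> (c \<otimes> gphi s w) \<otimes> inv c" by (simp only: e)
  also have "\<dots> = gphi s w \<otimes> inv c" using c g by (simp add: m_assoc)
  finally show "inv c \<otimes> gphi s w = gphi s w \<otimes> inv c" .
qed


lemma (in group) gphi_cong: "(\<And>j. j \<in> {1..m} \<Longrightarrow> s j = t j) \<Longrightarrow> w \<in> words m \<Longrightarrow> gphi s w = gphi t w"
  by (induction w) (auto simp: glt_def)

lemma (in group) GCen_cong: "(\<And>w. w \<in> Fm0 m \<Longrightarrow> gphi s w = gphi t w) \<Longrightarrow> GCen m s = GCen m t"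
  by (auto simp: GCen_def)

lemma (in group) GCen_conj:
  assumes f: "f \<in> carrier G" and ok: "gok m s" and c: "c \<in> GCen m s"
    and t: "\<And>w. w \<in> Fm0 m \<Longrightarrow> gphi t w = f \<otimes> gphi s w \<otimes> inv f"
  shows "f \<otimes> c \<otimes> inv f \<in> GCen m t"
  unfolding GCen_def
proof (intro CollectI conjI ballI)
  have cc: "c \<in> carrier G" using c by (simp add: GCen_def)
  then show "f \<otimes> c \<otimes> inv f \<in> carrier G" using f by simp
  fix w assume w: "w \<in> Fm0 m"
  have g: "gphi s w \<in> carrier G" using ok w by (simp add: Fm0_def)
  have e: "c \<otimes> gphi s w = gphi s w \<otimes> c" using c w by (simp add: GCen_def)
  have "f \<otimes> c \<otimes> inv f \<otimes> (f \<otimes> gphi s w \<otimes> inv f) = f \<otimes> (c \<otimes> gphi s w) \<otimes> inv f"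
    using f cc g by (simp add: m_assoc)
  also have "\<dots> = f \<otimes> (gphi s w \<otimes> c) \<otimes> inv f" by (simp only: e)
  also have "\<dots> = (f \<otimes> gphi s w \<otimes> inv f) \<otimes> (f \<otimes> c \<otimes> inv f)"
    using f cc g by (simp add: m_assoc)
  finally show "f \<otimes> c \<otimes> inv f \<otimes> gphi t w = gphi t w \<otimes> (f \<otimes> c \<otimes> inv f)" using t[OF w] by simp
qed

definition (in group) tw :: "nat \<Rightarrow> 'a \<Rightarrow> (nat \<Rightarrow> 'a) \<Rightarrow> nat \<Rightarrow> 'a" where
  "tw m c s = (\<lambda>j\<in>{1..m}. c \<otimes> s j)"
definition (in group) cj :: "nat \<Rightarrow> 'a \<Rightarrow> (nat \<Rightarrow> 'a) \<Rightarrow> nat \<Rightarrow> 'a" where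
  "cj m f s = (\<lambda>j\<in>{1..m}. f \<otimes> s j \<otimes> inv f)"

lemma (in group) GCen_one: "gok m s \<Longrightarrow> \<one> \<in> GCen m s"
  by (auto simp: GCen_def Fm0_def)

lemma (in group) sim_char:
  assumes oks: "gok m \<sigma>" and okt: "gok m \<tau>" and m: "1 \<le> m"
  shows "(\<exists>f\<in>carrier G. (\<lambda>c. cj m f (tw m c \<sigma>)) ` GCen m \<sigma> = (\<lambda>c. tw m c \<tau>) ` GCen m \<tau>)
     \<longleftrightarrow> (\<exists>f\<in>carrier G. \<forall>w\<in>Fm0 m. f \<otimes> gphi \<sigma> w = gphi \<tau> w \<otimes> f)"
proof
  assume "\<exists>f\<in>carrier G. (\<lambda>c. cj m f (tw m c \<sigma>)) ` GCen m \<sigma> = (\<lambda>c. tw m c \<tau>) ` GCen m \<tau>"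
  then obtain f where f: "f \<in> carrier G" and eq: "(\<lambda>c. cj m f (tw m c \<sigma>)) ` GCen m \<sigma> = (\<lambda>c. tw m c \<tau>) ` GCen m \<tau>"
    by blast
  have "cj m f (tw m \<one> \<sigma>) \<in> (\<lambda>c. tw m c \<tau>) ` GCen m \<tau>"
    using eq GCen_one[OF oks] by blast
  then obtain c where c: "c \<in> GCen m \<tau>" and ceq: "cj m f (tw m \<one> \<sigma>) = tw m c \<tau>" by blast
  have comp: "f \<otimes> \<sigma> j \<otimes> inv f = c \<otimes> \<tau> j" if "j \<in> {1..m}" for j
  proof -
    have "cj m f (tw m \<one> \<sigma>) j = tw m c \<tau> j" using ceq by simp
    then show ?thesis using that oks by (simp add: cj_def tw_def gok_def)
  qed
  have "\<forall>w\<in>Fm0 m. f \<otimes> gphi \<sigma> w = gphi \<tau> w \<otimes> f"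
  proof
    fix w assume w: "w \<in> Fm0 m"
    have ww: "w \<in> words m" using w by (simp add: Fm0_def)
    have "f \<otimes> gphi \<sigma> w \<otimes> inv f = gphi (\<lambda>j. f \<otimes> \<sigma> j \<otimes> inv f) w"
      using gphi_conj[OF oks f ww] by simp
    also have "\<dots> = gphi (\<lambda>j. c \<otimes> \<tau> j) w" using gphi_cong[OF comp ww] by simp
    also have "\<dots> = gphi \<tau> w" using twist[OF okt c w] .
    finally have e: "f \<otimes> gphi \<sigma> w \<otimes> inv f = gphi \<tau> w" .
    have g: "gphi \<sigma> w \<in> carrier G" using oks ww by simp
    have "gphi \<tau> w \<otimes> f = f \<otimes> gphi \<sigma> w \<otimes> inv f \<otimes> f" using e by simp
    also have "\<dots> = f \<otimes> gphi \<sigma> w" using f g by (simp add: m_assoc)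
    finally show "f \<otimes> gphi \<sigma> w = gphi \<tau> w \<otimes> f" by simp
  qed
  then show "\<exists>f\<in>carrier G. \<forall>w\<in>Fm0 m. f \<otimes> gphi \<sigma> w = gphi \<tau> w \<otimes> f" using f by blast
next
  assume "\<exists>f\<in>carrier G. \<forall>w\<in>Fm0 m. f \<otimes> gphi \<sigma> w = gphi \<tau> w \<otimes> f"
  then obtain f where f: "f \<in> carrier G" and fc: "\<And>w. w \<in> Fm0 m \<Longrightarrow> f \<otimes> gphi \<sigma> w = gphi \<tau> w \<otimes> f"
    by blast
  define \<rho> where "\<rho> = (\<lambda>j. f \<otimes> \<sigma> j \<otimes> inv f)"
  have okr: "gok m \<rho>" using oks f by (simp add: gok_def \<rho>_def)
  have sc: "\<sigma> j \<in> carrier G" "\<tau> j \<in> carrier G" "\<rho> j \<in> carrier G" if "j \<in> {1..m}" for j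
    using oks okt okr that by (auto simp: gok_def)
  have rt: "gphi \<rho> w = gphi \<tau> w" if w: "w \<in> Fm0 m" for w
  proof -
    have ww: "w \<in> words m" using w by (simp add: Fm0_def)
    have g: "gphi \<sigma> w \<in> carrier G" "gphi \<tau> w \<in> carrier G" using oks okt ww by auto
    have "gphi \<rho> w = f \<otimes> gphi \<sigma> w \<otimes> inv f" using gphi_conj[OF oks f ww] by (simp add: \<rho>_def)
    also have "\<dots> = gphi \<tau> w \<otimes> f \<otimes> inv f" using fc[OF w] by simp
    also have "\<dots> = gphi \<tau> w" using g f by (simp add: m_assoc)
    finally show ?thesis .
  qed
  have rs: "gphi \<rho> w = f \<otimes> gphi \<sigma> w \<otimes> inv f" if w: "w \<in> Fm0 m" for w
    using gphi_conj[OF oks f] w by (simp add: \<rho>_def Fm0_def)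
  have 1: "1 \<in> {1..m}" using m by simp
  define d where "d = \<rho> 1 \<otimes> inv (\<tau> 1)"
  have dc: "d \<in> carrier G" using sc[OF 1] by (simp add: d_def)
  have rd: "\<rho> j = d \<otimes> \<tau> j" if j: "j \<in> {1..m}" for j
  proof -
    have "[(1, False), (j, True)] \<in> Fm0 m" using 1 j by (simp add: Fm0_def)
    then have "inv (\<rho> 1) \<otimes> \<rho> j = inv (\<tau> 1) \<otimes> \<tau> j"
      using rt[of "[(1, False), (j, True)]"] sc[OF 1] sc[OF j] by (simp add: glt_def)
    then have "\<rho> 1 \<otimes> (inv (\<rho> 1) \<otimes> \<rho> j) = \<rho> 1 \<otimes> (inv (\<tau> 1) \<otimes> \<tau> j)" by simp
    then show ?thesis using sc[OF 1] sc[OF j] by (simp add: d_def m_assoc)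
  qed
  have dC: "d \<in> GCen m \<tau>"
    unfolding GCen_def
  proof (intro CollectI conjI ballI)
    show "d \<in> carrier G" by (rule dc)
    fix w assume w: "w \<in> Fm0 m"
    have ww: "w \<in> words m" using w by (simp add: Fm0_def)
    have g: "gphi \<tau> w \<in> carrier G" using okt ww by simp
    have "(1, False) # w @ [(1, True)] \<in> Fm0 m" using 1 w by (simp add: Fm0_def)
    then have "gphi \<rho> ((1, False) # w @ [(1, True)]) = gphi \<tau> ((1, False) # w @ [(1, True)])" by (rule rt)
    then have "inv (\<rho> 1) \<otimes> (gphi \<rho> w \<otimes> \<rho> 1) = inv (\<tau> 1) \<otimes> (gphi \<tau> w \<otimes> \<tau> 1)"
      using okr okt ww 1 sc[OF 1] by (simp add: gphi_append glt_def)
    then have e: "inv (\<rho> 1) \<otimes> (gphi \<tau> w \<otimes> \<rho> 1) = inv (\<tau> 1) \<otimes> (gphi \<tau> w \<otimes> \<tau> 1)" using rt[OF w] by simp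
    have "\<rho> 1 \<otimes> (inv (\<rho> 1) \<otimes> (gphi \<tau> w \<otimes> \<rho> 1)) \<otimes> inv (\<tau> 1) = \<rho> 1 \<otimes> (inv (\<tau> 1) \<otimes> (gphi \<tau> w \<otimes> \<tau> 1)) \<otimes> inv (\<tau> 1)"
      using e by simp
    then show "d \<otimes> gphi \<tau> w = gphi \<tau> w \<otimes> d" using sc[OF 1] g by (simp add: d_def m_assoc)
  qed
  have CC: "GCen m \<rho> = GCen m \<tau>" by (rule GCen_cong) (rule rt)
  have form: "cj m f (tw m c \<sigma>) = tw m (f \<otimes> c \<otimes> inv f \<otimes> d) \<tau>" if c: "c \<in> carrier G" for c
  proof
    fix j show "cj m f (tw m c \<sigma>) j = tw m (f \<otimes> c \<otimes> inv f \<otimes> d) \<tau> j"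
    proof (cases "j \<in> {1..m}")
      case True
      have "f \<otimes> (c \<otimes> \<sigma> j) \<otimes> inv f = (f \<otimes> c \<otimes> inv f) \<otimes> \<rho> j"
        using f c sc[OF True] by (simp add: \<rho>_def m_assoc)
      also have "\<dots> = f \<otimes> c \<otimes> inv f \<otimes> d \<otimes> \<tau> j" using rd[OF True] f c dc sc[OF True] by (simp add: m_assoc)
      finally show ?thesis using True by (simp add: cj_def tw_def)
    next
      case False then show ?thesis unfolding cj_def tw_def restrict_def by (simp only: if_False)
    qed
  qed
  have "(\<lambda>c. cj m f (tw m c \<sigma>)) ` GCen m \<sigma> = (\<lambda>c. tw m c \<tau>) ` GCen m \<tau>"
  proof (intro equalityI subsetI)
    fix x assume "x \<in> (\<lambda>c. cj m f (tw m c \<sigma>)) ` GCen m \<sigma>"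
    then obtain c where c: "c \<in> GCen m \<sigma>" and x: "x = cj m f (tw m c \<sigma>)" by blast
    have cc: "c \<in> carrier G" using c by (simp add: GCen_def)
    have "f \<otimes> c \<otimes> inv f \<in> GCen m \<tau>" using GCen_conj[OF f oks c rs] CC by simp
    then have "f \<otimes> c \<otimes> inv f \<otimes> d \<in> GCen m \<tau>" using GCen_mult dC okt by blast
    then show "x \<in> (\<lambda>c. tw m c \<tau>) ` GCen m \<tau>" using x form[OF cc] by blast
  next
    fix x assume "x \<in> (\<lambda>c. tw m c \<tau>) ` GCen m \<tau>"
    then obtain c where c: "c \<in> GCen m \<tau>" and x: "x = tw m c \<tau>" by blast
    have cc: "c \<in> carrier G" using c by (simp add: GCen_def)
    have c1: "c \<otimes> inv d \<in> GCen m \<rho>" using GCen_mult[OF c GCen_inv[OF dC okt] okt] CC by simp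
    have rs': "gphi \<sigma> w = inv f \<otimes> gphi \<rho> w \<otimes> inv (inv f)" if "w \<in> Fm0 m" for w
      using rs[OF that] f oks that by (simp add: m_assoc Fm0_def)
    have c2: "inv f \<otimes> (c \<otimes> inv d) \<otimes> inv (inv f) \<in> GCen m \<sigma>"
      using GCen_conj[OF _ okr c1 rs'] f by simp
    have "cj m f (tw m (inv f \<otimes> (c \<otimes> inv d) \<otimes> inv (inv f)) \<sigma>) = tw m c \<tau>"
      using form[of "inv f \<otimes> (c \<otimes> inv d) \<otimes> inv (inv f)"] f cc dc by (simp add: m_assoc)
    then show "x \<in> (\<lambda>c. cj m f (tw m c \<sigma>)) ` GCen m \<sigma>" using c2 x by (metis image_eqI)
  qed
  then show "\<exists>f\<in>carrier G. (\<lambda>c. cj m f (tw m c \<sigma>)) ` GCen m \<sigma> = (\<lambda>c. tw m c \<tau>) ` GCen m \<tau>"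
    using f by blast
qed


interpretation SG: group "sym_group n" for n by (rule sym_group_is_group)

lemma gok_G: "g \<in> carrier (Gnm n m) \<Longrightarrow> SG.gok n m g"
  by (auto simp: Gnm_def SG.gok_def PiE_iff)

lemma phi_gphi: "SG.gok n m s \<Longrightarrow> w \<in> words m \<Longrightarrow> phi s w = SG.gphi n s w"
proof (induction w)
  case Nil then show ?case by (simp add: phi_def sym_group_one)
next
  case (Cons a w)
  obtain i b where a: "a = (i, b)" by (cases a)
  have si: "s i \<in> carrier (sym_group n)" using Cons.prems a by (auto simp: SG.gok_def)
  have "phi s (a # w) = (if b then s i else inv' (s i)) \<circ> phi s w"
    by (simp add: phi_def a)
  then show ?case using Cons si a
    by (simp add: SG.glt_def sym_group_mult sym_group_inv_equality)
qed

lemma aut_eq: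
  assumes ok: "SG.gok n m s"
  shows "AutF0 n m s = SG.GCen n m s"
proof -
  have key: "(\<forall>x\<in>{1..n}. f (phi s w x) = phi s w (f x)) \<longleftrightarrow> f \<circ> phi s w = phi s w \<circ> f"
    if f: "f permutes {1..n}" and w: "w \<in> Fm0 m" for f w
  proof
    assume h: "\<forall>x\<in>{1..n}. f (phi s w x) = phi s w (f x)"
    have p: "phi s w permutes {1..n}"
      using SG.gphi_closed[OF ok, of w] w phi_gphi[OF ok, of w] by (simp add: sym_group_carrier Fm0_def)
    show "f \<circ> phi s w = phi s w \<circ> f"
    proof
      fix x show "(f \<circ> phi s w) x = (phi s w \<circ> f) x"
      proof (cases "x \<in> {1..n}")
        case True then show ?thesis using h by simp
      next
        case False then show ?thesis using p f by (simp add: permutes_not_in)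
      qed
    qed
  next
    assume "f \<circ> phi s w = phi s w \<circ> f"
    then show "\<forall>x\<in>{1..n}. f (phi s w x) = phi s w (f x)" by (metis comp_apply)
  qed
  have pg: "w \<in> Fm0 m \<Longrightarrow> phi s w = SG.gphi n s w" for w using phi_gphi[OF ok] by (simp add: Fm0_def)
  show ?thesis
    unfolding AutF0_def SG.GCen_def sym_group_carrier sym_group_mult
    using key pg by (auto simp: sym_group_carrier sym_group_mult)
qed

lemma cent_eq:
  assumes ok: "SG.gok n m s"
  shows "centralizer (sym_group n) (phi s ` Fm0 m) = SG.GCen n m s"
proof -
  have pg: "w \<in> Fm0 m \<Longrightarrow> phi s w = SG.gphi n s w" for w using phi_gphi[OF ok] by (simp add: Fm0_def)
  show ?thesis using pg by (auto simp: centralizer_def SG.GCen_def)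
qed

lemma grpG: "group (Gnm n m)"
  by (simp add: Gnm_def sym_group_is_group)

lemma pow_G:
  assumes g: "g \<in> carrier (Gnm n m)"
  shows "g [^]\<^bsub>Gnm n m\<^esub> (i::int) = (\<lambda>j\<in>{1..m}. g j [^]\<^bsub>sym_group n\<^esub> i)"
proof
  fix j
  have c: "g [^]\<^bsub>Gnm n m\<^esub> i \<in> carrier (Gnm n m)" using g group.int_pow_closed[OF grpG] by blast
  show "(g [^]\<^bsub>Gnm n m\<^esub> i) j = (\<lambda>j\<in>{1..m}. g j [^]\<^bsub>sym_group n\<^esub> i) j"
  proof (cases "j \<in> {1..m}")
    case True
    have "(\<lambda>x. x j) \<in> hom (Gnm n m) (sym_group n)"
      using True by (intro homI) (auto simp: Gnm_def PiE_iff)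
    then have "(g [^]\<^bsub>Gnm n m\<^esub> i) j = g j [^]\<^bsub>sym_group n\<^esub> i"
      using hom_int_pow[of "\<lambda>x. x j", OF _ g grpG sym_group_is_group] by simp
    then show ?thesis using True by simp
  next
    case False then show ?thesis using c by (auto simp: Gnm_def PiE_def extensional_def)
  qed
qed

lemma coset_conj: "(a <#\<^bsub>G\<^esub> X) #>\<^bsub>G\<^esub> b = (\<lambda>x. a \<otimes>\<^bsub>G\<^esub> x \<otimes>\<^bsub>G\<^esub> b) ` X"
  by (auto simp: l_coset_def r_coset_def)

lemma (in group) conj_mem:
  assumes a: "a \<in> carrier G" and y: "y \<in> carrier G" and X: "X \<subseteq> carrier G"
  shows "y \<in> (\<lambda>x. a \<otimes> x \<otimes> inv a) ` X \<longleftrightarrow> inv a \<otimes> y \<otimes> a \<in> X"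
proof
  assume "y \<in> (\<lambda>x. a \<otimes> x \<otimes> inv a) ` X"
  then obtain x where x: "x \<in> X" "y = a \<otimes> x \<otimes> inv a" by blast
  have xc: "x \<in> carrier G" using x(1) X by blast
  have "inv a \<otimes> y \<otimes> a = x" unfolding x(2) using a xc by (simp add: m_assoc)
  then show "inv a \<otimes> y \<otimes> a \<in> X" using x(1) by simp
next
  assume h: "inv a \<otimes> y \<otimes> a \<in> X"
  have "y = a \<otimes> (inv a \<otimes> y \<otimes> a) \<otimes> inv a" using a y by (simp add: m_assoc)
  then show "y \<in> (\<lambda>x. a \<otimes> x \<otimes> inv a) ` X" using h by blast
qed

lemma diag_carrier: "\<sigma> \<in> carrier (sym_group n) \<Longrightarrow> diag m \<sigma> \<in> carrier (Gnm n m)"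
  unfolding diag_def Gnm_def carrier_product_group restrict_PiE_iff by blast

lemma H_sub: "Hdiag n m \<subseteq> carrier (Gnm n m)"
  unfolding Hdiag_def using diag_carrier by blast

lemma diag_mem:
  assumes m: "1 \<le> m" and F: "\<And>j. j \<in> {1..m} \<Longrightarrow> F j \<in> carrier (sym_group n)"
  shows "(\<lambda>j\<in>{1..m}. F j) \<in> Hdiag n m \<longleftrightarrow> (\<forall>j\<in>{1..m}. \<forall>k\<in>{1..m}. F j = F k)"
proof
  assume "(\<lambda>j\<in>{1..m}. F j) \<in> Hdiag n m"
  then obtain \<rho> where e: "(\<lambda>j\<in>{1..m}. F j) = diag m \<rho>" unfolding Hdiag_def by (rule imageE)
  have "F j = \<rho>" if j: "j \<in> {1..m}" for j
  proof -
    have "(\<lambda>j\<in>{1..m}. F j) j = diag m \<rho> j" using e by (rule fun_cong)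
    then show ?thesis unfolding diag_def restrict_apply' [OF j] .
  qed
  then show "\<forall>j\<in>{1..m}. \<forall>k\<in>{1..m}. F j = F k" by metis
next
  assume h: "\<forall>j\<in>{1..m}. \<forall>k\<in>{1..m}. F j = F k"
  have 1: "1 \<in> {1..m}" using m by simp
  have "(\<lambda>j\<in>{1..m}. F j) = diag m (F 1)"
    unfolding diag_def
  proof (rule restrict_ext)
    fix j assume "j \<in> {1..m}" then show "F j = F 1" using h 1 by blast
  qed
  moreover have "diag m (F 1) \<in> Hdiag n m" unfolding Hdiag_def using F[OF 1] by (rule imageI)
  ultimately show "(\<lambda>j\<in>{1..m}. F j) \<in> Hdiag n m" by simp
qed

lemma Hx_mem:
  assumes m: "1 \<le> m" and g: "g \<in> carrier (Gnm n m)" and s: "\<sigma> \<in> carrier (sym_group n)"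
  shows "diag m \<sigma> \<in> Hx (Gnm n m) (Hdiag n m) g \<longleftrightarrow>
    (\<forall>i::int. \<forall>j\<in>{1..m}. \<forall>k\<in>{1..m}.
       inv\<^bsub>sym_group n\<^esub> (g j [^]\<^bsub>sym_group n\<^esub> i) \<otimes>\<^bsub>sym_group n\<^esub> \<sigma> \<otimes>\<^bsub>sym_group n\<^esub> g j [^]\<^bsub>sym_group n\<^esub> i
     = inv\<^bsub>sym_group n\<^esub> (g k [^]\<^bsub>sym_group n\<^esub> i) \<otimes>\<^bsub>sym_group n\<^esub> \<sigma> \<otimes>\<^bsub>sym_group n\<^esub> g k [^]\<^bsub>sym_group n\<^esub> i)"
proof -
  interpret GG: group "Gnm n m" by (rule grpG)
  have gj: "g j \<in> carrier (sym_group n)" if "j \<in> {1..m}" for j using g that by (auto simp: Gnm_def)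
  have one: "diag m \<sigma> \<in> (g [^]\<^bsub>Gnm n m\<^esub> i <#\<^bsub>Gnm n m\<^esub> Hdiag n m) #>\<^bsub>Gnm n m\<^esub> inv\<^bsub>Gnm n m\<^esub> (g [^]\<^bsub>Gnm n m\<^esub> i)
     \<longleftrightarrow> (\<forall>j\<in>{1..m}. \<forall>k\<in>{1..m}.
       inv\<^bsub>sym_group n\<^esub> (g j [^]\<^bsub>sym_group n\<^esub> i) \<otimes>\<^bsub>sym_group n\<^esub> \<sigma> \<otimes>\<^bsub>sym_group n\<^esub> g j [^]\<^bsub>sym_group n\<^esub> i
     = inv\<^bsub>sym_group n\<^esub> (g k [^]\<^bsub>sym_group n\<^esub> i) \<otimes>\<^bsub>sym_group n\<^esub> \<sigma> \<otimes>\<^bsub>sym_group n\<^esub> g k [^]\<^bsub>sym_group n\<^esub> i)"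
    for i :: int
  proof -
    define a where "a = g [^]\<^bsub>Gnm n m\<^esub> i"
    have ac: "a \<in> carrier (Gnm n m)" using g by (simp add: a_def)
    have aeq: "a = (\<lambda>j\<in>{1..m}. g j [^]\<^bsub>sym_group n\<^esub> i)" using pow_G[OF g] by (simp add: a_def)
    have ainv: "inv\<^bsub>Gnm n m\<^esub> a = (\<lambda>j\<in>{1..m}. inv\<^bsub>sym_group n\<^esub> (g j [^]\<^bsub>sym_group n\<^esub> i))"
      using ac aeq by (simp add: Gnm_def sym_group_is_group cong: restrict_cong)
    have prod: "inv\<^bsub>Gnm n m\<^esub> a \<otimes>\<^bsub>Gnm n m\<^esub> diag m \<sigma> \<otimes>\<^bsub>Gnm n m\<^esub> a
       = (\<lambda>j\<in>{1..m}. inv\<^bsub>sym_group n\<^esub> (g j [^]\<^bsub>sym_group n\<^esub> i) \<otimes>\<^bsub>sym_group n\<^esub> \<sigma> \<otimes>\<^bsub>sym_group n\<^esub> g j [^]\<^bsub>sym_group n\<^esub> i)"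
      unfolding ainv by (subst aeq) (simp add: Gnm_def diag_def cong: restrict_cong)
    have "diag m \<sigma> \<in> (a <#\<^bsub>Gnm n m\<^esub> Hdiag n m) #>\<^bsub>Gnm n m\<^esub> inv\<^bsub>Gnm n m\<^esub> a
       \<longleftrightarrow> inv\<^bsub>Gnm n m\<^esub> a \<otimes>\<^bsub>Gnm n m\<^esub> diag m \<sigma> \<otimes>\<^bsub>Gnm n m\<^esub> a \<in> Hdiag n m"
      unfolding coset_conj using GG.conj_mem[OF ac diag_carrier[OF s] H_sub] .
    also have "\<dots> \<longleftrightarrow> (\<forall>j\<in>{1..m}. \<forall>k\<in>{1..m}.
       inv\<^bsub>sym_group n\<^esub> (g j [^]\<^bsub>sym_group n\<^esub> i) \<otimes>\<^bsub>sym_group n\<^esub> \<sigma> \<otimes>\<^bsub>sym_group n\<^esub> g j [^]\<^bsub>sym_group n\<^esub> i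
     = inv\<^bsub>sym_group n\<^esub> (g k [^]\<^bsub>sym_group n\<^esub> i) \<otimes>\<^bsub>sym_group n\<^esub> \<sigma> \<otimes>\<^bsub>sym_group n\<^esub> g k [^]\<^bsub>sym_group n\<^esub> i)"
      unfolding prod by (rule diag_mem[OF m]) (use gj s in simp)
    finally show ?thesis unfolding a_def .
  qed
  show ?thesis unfolding Hx_def using one by blast
qed

lemma part1a:
  assumes m: "1 \<le> m" and g: "g \<in> carrier (Gnm n m)"
  shows "{\<sigma> \<in> carrier (sym_group n). diag m \<sigma> \<in> Hx (Gnm n m) (Hdiag n m) g} = SG.GCen n m g"
proof -
  have ok: "SG.gok n m g" using gok_G[OF g] .
  show ?thesis
  proof (intro equalityI subsetI)
    fix \<sigma> assume "\<sigma> \<in> {\<sigma> \<in> carrier (sym_group n). diag m \<sigma> \<in> Hx (Gnm n m) (Hdiag n m) g}"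
    then have s: "\<sigma> \<in> carrier (sym_group n)" and h: "diag m \<sigma> \<in> Hx (Gnm n m) (Hdiag n m) g" by auto
    show "\<sigma> \<in> SG.GCen n m g"
      using SG.D_imp_Cen[OF ok m s] Hx_mem[OF m g s] h by blast
  next
    fix \<sigma> assume c: "\<sigma> \<in> SG.GCen n m g"
    then have s: "\<sigma> \<in> carrier (sym_group n)" by (simp add: SG.GCen_def)
    have "diag m \<sigma> \<in> Hx (Gnm n m) (Hdiag n m) g"
      using Hx_mem[OF m g s] SG.Cen_imp_D[OF ok c] by blast
    then show "\<sigma> \<in> {\<sigma> \<in> carrier (sym_group n). diag m \<sigma> \<in> Hx (Gnm n m) (Hdiag n m) g}" using s by blast
  qed
qed


lemma Hx_eq:
  assumes m: "1 \<le> m" and g: "g \<in> carrier (Gnm n m)"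
  shows "Hx (Gnm n m) (Hdiag n m) g = diag m ` SG.GCen n m g"
proof (intro equalityI subsetI)
  interpret GG: group "Gnm n m" by (rule grpG)
  fix x assume x: "x \<in> Hx (Gnm n m) (Hdiag n m) g"
  then have "x \<in> (g [^]\<^bsub>Gnm n m\<^esub> (0::int) <#\<^bsub>Gnm n m\<^esub> Hdiag n m) #>\<^bsub>Gnm n m\<^esub> inv\<^bsub>Gnm n m\<^esub> (g [^]\<^bsub>Gnm n m\<^esub> (0::int))"
    unfolding Hx_def by blast
  then obtain y where y: "y \<in> Hdiag n m" "x = \<one>\<^bsub>Gnm n m\<^esub> \<otimes>\<^bsub>Gnm n m\<^esub> y \<otimes>\<^bsub>Gnm n m\<^esub> \<one>\<^bsub>Gnm n m\<^esub>"
    unfolding coset_conj by auto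
  then have "y \<in> carrier (Gnm n m)" using H_sub by blast
  then have "x \<in> Hdiag n m" using y by simp
  then obtain \<sigma> where s: "\<sigma> \<in> carrier (sym_group n)" and xs: "x = diag m \<sigma>" by (auto simp: Hdiag_def)
  then have "\<sigma> \<in> {\<sigma> \<in> carrier (sym_group n). diag m \<sigma> \<in> Hx (Gnm n m) (Hdiag n m) g}" using x by simp
  then show "x \<in> diag m ` SG.GCen n m g" using part1a[OF m g] xs by blast
next
  fix x assume "x \<in> diag m ` SG.GCen n m g"
  then obtain \<sigma> where "\<sigma> \<in> SG.GCen n m g" "x = diag m \<sigma>" by blast
  then show "x \<in> Hx (Gnm n m) (Hdiag n m) g" using part1a[OF m g] by blast
qed

lemma Sx_eq:
  assumes m: "1 \<le> m" and g: "g \<in> carrier (Gnm n m)"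
  shows "Sx (Gnm n m) (Hdiag n m) g = (\<lambda>c. SG.tw n m c g) ` SG.GCen n m g"
proof -
  have "Sx (Gnm n m) (Hdiag n m) g = (\<lambda>h. h \<otimes>\<^bsub>Gnm n m\<^esub> g) ` (diag m ` SG.GCen n m g)"
    unfolding Sx_def Hx_eq[OF m g] by (auto simp: r_coset_def)
  also have "\<dots> = (\<lambda>c. SG.tw n m c g) ` SG.GCen n m g"
    unfolding image_image
    by (rule image_cong) (simp_all add: Gnm_def diag_def SG.tw_def cong: restrict_cong)
  finally show ?thesis .
qed

lemma sim_eq:
  assumes m: "1 \<le> m" and s: "\<sigma> \<in> carrier (Gnm n m)" and t: "\<tau> \<in> carrier (Gnm n m)"
  shows "sim_rel (Gnm n m) (Hdiag n m) \<sigma> \<tau> \<longleftrightarrow>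
    (\<exists>f\<in>carrier (sym_group n). (\<lambda>c. SG.cj n m f (SG.tw n m c \<sigma>)) ` SG.GCen n m \<sigma> = (\<lambda>c. SG.tw n m c \<tau>) ` SG.GCen n m \<tau>)"
proof -
  have conj: "diag m f <#\<^bsub>Gnm n m\<^esub> Sx (Gnm n m) (Hdiag n m) \<sigma> #>\<^bsub>Gnm n m\<^esub> inv\<^bsub>Gnm n m\<^esub> (diag m f)
      = (\<lambda>c. SG.cj n m f (SG.tw n m c \<sigma>)) ` SG.GCen n m \<sigma>" if f: "f \<in> carrier (sym_group n)" for f
  proof -
    have dinv: "inv\<^bsub>Gnm n m\<^esub> (diag m f) = (\<lambda>j\<in>{1..m}. inv\<^bsub>sym_group n\<^esub> f)"
      using diag_carrier[OF f, of m] by (simp add: Gnm_def sym_group_is_group diag_def cong: restrict_cong)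
    show ?thesis
      unfolding coset_conj Sx_eq[OF m s] image_image dinv
      by (rule image_cong) (simp_all add: Gnm_def diag_def SG.tw_def SG.cj_def cong: restrict_cong)
  qed
  have "sim_rel (Gnm n m) (Hdiag n m) \<sigma> \<tau> \<longleftrightarrow> (\<exists>f\<in>carrier (sym_group n).
      diag m f <#\<^bsub>Gnm n m\<^esub> Sx (Gnm n m) (Hdiag n m) \<sigma> #>\<^bsub>Gnm n m\<^esub> inv\<^bsub>Gnm n m\<^esub> (diag m f)
       = Sx (Gnm n m) (Hdiag n m) \<tau>)"
  proof
    assume "sim_rel (Gnm n m) (Hdiag n m) \<sigma> \<tau>"
    then obtain h where h: "h \<in> Hdiag n m" and e: "h <#\<^bsub>Gnm n m\<^esub> Sx (Gnm n m) (Hdiag n m) \<sigma> #>\<^bsub>Gnm n m\<^esub> inv\<^bsub>Gnm n m\<^esub> h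
       = Sx (Gnm n m) (Hdiag n m) \<tau>" unfolding sim_rel_def ..
    from h obtain f where hf: "h = diag m f" and f: "f \<in> carrier (sym_group n)" unfolding Hdiag_def ..
    have e': "diag m f <#\<^bsub>Gnm n m\<^esub> Sx (Gnm n m) (Hdiag n m) \<sigma> #>\<^bsub>Gnm n m\<^esub> inv\<^bsub>Gnm n m\<^esub> (diag m f)
       = Sx (Gnm n m) (Hdiag n m) \<tau>" unfolding hf[symmetric] by (rule e)
    from e' f show "\<exists>f\<in>carrier (sym_group n).
      diag m f <#\<^bsub>Gnm n m\<^esub> Sx (Gnm n m) (Hdiag n m) \<sigma> #>\<^bsub>Gnm n m\<^esub> inv\<^bsub>Gnm n m\<^esub> (diag m f)
       = Sx (Gnm n m) (Hdiag n m) \<tau>" by (rule bexI)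
  next
    assume "\<exists>f\<in>carrier (sym_group n).
      diag m f <#\<^bsub>Gnm n m\<^esub> Sx (Gnm n m) (Hdiag n m) \<sigma> #>\<^bsub>Gnm n m\<^esub> inv\<^bsub>Gnm n m\<^esub> (diag m f)
       = Sx (Gnm n m) (Hdiag n m) \<tau>"
    then obtain f where f: "f \<in> carrier (sym_group n)" and e: "diag m f <#\<^bsub>Gnm n m\<^esub> Sx (Gnm n m) (Hdiag n m) \<sigma> #>\<^bsub>Gnm n m\<^esub> inv\<^bsub>Gnm n m\<^esub> (diag m f)
       = Sx (Gnm n m) (Hdiag n m) \<tau>" ..
    have d: "diag m f \<in> Hdiag n m" using f unfolding Hdiag_def by (rule imageI)
    from e d show "sim_rel (Gnm n m) (Hdiag n m) \<sigma> \<tau>" unfolding sim_rel_def by (rule bexI)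
  qed
  also have "\<dots> \<longleftrightarrow> (\<exists>f\<in>carrier (sym_group n). (\<lambda>c. SG.cj n m f (SG.tw n m c \<sigma>)) ` SG.GCen n m \<sigma> = (\<lambda>c. SG.tw n m c \<tau>) ` SG.GCen n m \<tau>)"
  proof (rule bex_cong[OF refl])
    fix f assume f: "f \<in> carrier (sym_group n)"
    show "(diag m f <#\<^bsub>Gnm n m\<^esub> Sx (Gnm n m) (Hdiag n m) \<sigma> #>\<^bsub>Gnm n m\<^esub> inv\<^bsub>Gnm n m\<^esub> (diag m f)
       = Sx (Gnm n m) (Hdiag n m) \<tau>) \<longleftrightarrow> ((\<lambda>c. SG.cj n m f (SG.tw n m c \<sigma>)) ` SG.GCen n m \<sigma> = (\<lambda>c. SG.tw n m c \<tau>) ` SG.GCen n m \<tau>)"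
      unfolding conj[OF f] Sx_eq[OF m t] ..
  qed
  finally show ?thesis .
qed

lemma iso_eq:
  assumes oks: "SG.gok n m \<sigma>" and okt: "SG.gok n m \<tau>"
  shows "iso_F0 n m \<sigma> \<tau> \<longleftrightarrow> (\<exists>f\<in>carrier (sym_group n). \<forall>w\<in>Fm0 m.
     f \<otimes>\<^bsub>sym_group n\<^esub> SG.gphi n \<sigma> w = SG.gphi n \<tau> w \<otimes>\<^bsub>sym_group n\<^esub> f)"
proof -
  have pg: "phi \<sigma> w = SG.gphi n \<sigma> w" "phi \<tau> w = SG.gphi n \<tau> w" if "w \<in> Fm0 m" for w
    using phi_gphi[OF oks] phi_gphi[OF okt] that by (auto simp: Fm0_def)
  have pp: "phi \<sigma> w permutes {1..n}" "phi \<tau> w permutes {1..n}" if "w \<in> Fm0 m" for w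
    using SG.gphi_closed[OF oks, of w] SG.gphi_closed[OF okt, of w] pg[OF that] that
    by (auto simp: sym_group_carrier Fm0_def)
  show ?thesis
  proof
    assume "iso_F0 n m \<sigma> \<tau>"
    then obtain f where bf: "bij_betw f {1..n} {1..n}"
      and fc: "\<And>w x. w \<in> Fm0 m \<Longrightarrow> x \<in> {1..n} \<Longrightarrow> f (phi \<sigma> w x) = phi \<tau> w (f x)"
      unfolding iso_F0_def by blast
    define f' where "f' x = (if x \<in> {1..n} then f x else x)" for x
    have "bij_betw f' {1..n} {1..n}" using bf by (rule bij_betw_cong[THEN iffD1, rotated]) (simp add: f'_def)
    then have fp: "f' permutes {1..n}" by (rule bij_imp_permutes) (auto simp: f'_def)
    have "f' \<circ> phi \<sigma> w = phi \<tau> w \<circ> f'" if w: "w \<in> Fm0 m" for w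
    proof
      fix x show "(f' \<circ> phi \<sigma> w) x = (phi \<tau> w \<circ> f') x"
      proof (cases "x \<in> {1..n}")
        case True
        have "phi \<sigma> w x \<in> {1..n}" using permutes_in_image[OF pp(1)[OF w]] True by blast
        moreover have "f x \<in> {1..n}" using bf True by (auto simp: bij_betw_def)
        ultimately show ?thesis using True fc[OF w True] by (simp add: f'_def)
      next
        case False
        have e1: "phi \<sigma> w x = x" using pp(1)[OF w] False by (rule permutes_not_in)
        have e2: "phi \<tau> w x = x" using pp(2)[OF w] False by (rule permutes_not_in)
        have e3: "f' x = x" unfolding f'_def using False by (rule if_not_P)
        show ?thesis by (simp only: comp_apply e1 e2 e3)
      qed
    qed
    then show "\<exists>f\<in>carrier (sym_group n). \<forall>w\<in>Fm0 m.
       f \<otimes>\<^bsub>sym_group n\<^esub> SG.gphi n \<sigma> w = SG.gphi n \<tau> w \<otimes>\<^bsub>sym_group n\<^esub> f"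
      using fp pg by (auto simp: sym_group_carrier sym_group_mult intro!: bexI[of _ f'])
  next
    assume "\<exists>f\<in>carrier (sym_group n). \<forall>w\<in>Fm0 m.
       f \<otimes>\<^bsub>sym_group n\<^esub> SG.gphi n \<sigma> w = SG.gphi n \<tau> w \<otimes>\<^bsub>sym_group n\<^esub> f"
    then obtain f where fp: "f permutes {1..n}" and fc: "\<And>w. w \<in> Fm0 m \<Longrightarrow> f \<circ> phi \<sigma> w = phi \<tau> w \<circ> f"
      using pg by (auto simp: sym_group_carrier sym_group_mult)
    have "bij_betw f {1..n} {1..n}" using fp by (rule permutes_imp_bij)
    moreover have "\<forall>w\<in>Fm0 m. \<forall>x\<in>{1..n}. f (phi \<sigma> w x) = phi \<tau> w (f x)"
      using fc by (metis comp_apply)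
    ultimately show "iso_F0 n m \<sigma> \<tau>" unfolding iso_F0_def by blast
  qed
qed

theorem lemma5p2:
  fixes n m :: nat
  assumes "n \<ge> 1" and "m \<ge> 1"
  shows "(\<forall>g \<in> carrier (Gnm n m).
            {\<sigma> \<in> carrier (sym_group n). diag m \<sigma> \<in> Hx (Gnm n m) (Hdiag n m) g}
              = AutF0 n m g
          \<and> AutF0 n m g = centralizer (sym_group n) (phi g ` Fm0 m))
       \<and> (\<forall>\<sigma> \<in> carrier (Gnm n m). \<forall>\<tau> \<in> carrier (Gnm n m).
            sim_rel (Gnm n m) (Hdiag n m) \<sigma> \<tau> \<longleftrightarrow> iso_F0 n m \<sigma> \<tau>)"
proof (intro conjI ballI)
  fix g assume g: "g \<in> carrier (Gnm n m)"
  have ok: "SG.gok n m g" using gok_G[OF g] .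
  show "{\<sigma> \<in> carrier (sym_group n). diag m \<sigma> \<in> Hx (Gnm n m) (Hdiag n m) g} = AutF0 n m g"
    unfolding part1a[OF assms(2) g] aut_eq[OF ok] ..
  show "AutF0 n m g = centralizer (sym_group n) (phi g ` Fm0 m)"
    unfolding cent_eq[OF ok] aut_eq[OF ok] ..
next
  fix \<sigma> \<tau> assume s: "\<sigma> \<in> carrier (Gnm n m)" and t: "\<tau> \<in> carrier (Gnm n m)"
  have "sim_rel (Gnm n m) (Hdiag n m) \<sigma> \<tau> \<longleftrightarrow>
    (\<exists>f\<in>carrier (sym_group n). (\<lambda>c. SG.cj n m f (SG.tw n m c \<sigma>)) ` SG.GCen n m \<sigma> = (\<lambda>c. SG.tw n m c \<tau>) ` SG.GCen n m \<tau>)"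
    by (rule sim_eq[OF assms(2) s t])
  also have "\<dots> \<longleftrightarrow> (\<exists>f\<in>carrier (sym_group n). \<forall>w\<in>Fm0 m.
     f \<otimes>\<^bsub>sym_group n\<^esub> SG.gphi n \<sigma> w = SG.gphi n \<tau> w \<otimes>\<^bsub>sym_group n\<^esub> f)"
    by (rule SG.sim_char[OF gok_G[OF s] gok_G[OF t] assms(2)])
  also have "\<dots> \<longleftrightarrow> iso_F0 n m \<sigma> \<tau>"
    by (rule iso_eq[OF gok_G[OF s] gok_G[OF t], symmetric])
  finally show "sim_rel (Gnm n m) (Hdiag n m) \<sigma> \<tau> \<longleftrightarrow> iso_F0 n m \<sigma> \<tau>" .
qed

end
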